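(* Let $C$ be an open cone containing no lines, with basepoint $b\in C$. The set of horofunctions of the Hilbert geometry on $C$ is $$\{\,r_{C,x}+f \;:\; x\in\partial C\setminus\{0\},\ f\in A_C(x)\,\}.$$
   Context: $V$ is a finite-dimensional real vector space. An open cone is a nonempty open convex set $T\subset V$ with $\lambda T\subseteq T$ for all $\lambda>0$ and $0\notin T$; $\partial T$ is its boundary in $V$. Write $x\le_T y$ iff $y-x\in\overline T$, $[0]_T:=\overline T\cap(-\overline T)$ (so $[0]_C=\{0\}$ when $C$ has no lines). $M_T(y/x):=\inf\{\lambda>0:y\le_T\lambda x\}$ ($y\in V,x\in T$), $F_T(y,x):=\log M_T(y/x)$, $RF_T(x,y):=F_T(y,x)$, $H_C(x,y):=F_C(x,y)+F_C(y,x)$. For $p\in\partial C\setminus\{0\}$, $r_{C,p}(x):=RF_C(x,p)-RF_C(b,p)$. For $d\in\{F_C,H_C\}$, a sequence $(x_n)$ in $C$ converges in the $d$-sense to $g$ if $d(\cdot,x_n)-d(b,x_n)\to g$ pointwise on $C$; a horofunction of $d$ is such a limit not of the form $d(\cdot,p)-d(b,p)$, $p\in C$. For $x\in\partial C\setminus\{0\}$, $A_C(x)$ is the set of Funk-geometry horofunctions ($d=F_C$) that are Funk-sense limits of sequences in $C$ converging to $x$ in the usual topology of $V$. *)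

theory Defs
  imports "HOL-Analysis.Analysis"
begin

definition open_cone :: "'a::euclidean_space set \<Rightarrow> bool" where
  "open_cone T \<longleftrightarrow> T \<noteq> {} \<and> open T \<and> convex T \<and>
     (\<forall>l::real. l > 0 \<longrightarrow> (\<forall>x\<in>T. l *\<^sub>R x \<in> T)) \<and> 0 \<notin> T"

definition contains_no_lines :: "'a::euclidean_space set \<Rightarrow> bool" where
  "contains_no_lines C \<longleftrightarrow> \<not> (\<exists>x v. v \<noteq> 0 \<and> (\<forall>t::real. x + t *\<^sub>R v \<in> C))"

definition cone_le :: "'a::euclidean_space set \<Rightarrow> 'a \<Rightarrow> 'a \<Rightarrow> bool" where
  "cone_le T x y \<longleftrightarrow> y - x \<in> closure T"

definition cone_M :: "'a::euclidean_space set \<Rightarrow> 'a \<Rightarrow> 'a \<Rightarrow> real" where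
  "cone_M T y x = Inf {l::real. l > 0 \<and> cone_le T y (l *\<^sub>R x)}"

definition funk :: "'a::euclidean_space set \<Rightarrow> 'a \<Rightarrow> 'a \<Rightarrow> real" where
  "funk T y x = ln (cone_M T y x)"

definition rev_funk :: "'a::euclidean_space set \<Rightarrow> 'a \<Rightarrow> 'a \<Rightarrow> real" where
  "rev_funk T x y = funk T y x"

definition hilbert :: "'a::euclidean_space set \<Rightarrow> 'a \<Rightarrow> 'a \<Rightarrow> real" where
  "hilbert C x y = funk C x y + funk C y x"

definition r_fun :: "'a::euclidean_space set \<Rightarrow> 'a \<Rightarrow> 'a \<Rightarrow> 'a \<Rightarrow> real" where
  "r_fun C b p x = rev_funk C x p - rev_funk C b p"

definition d_converges ::
  "('a \<Rightarrow> 'a \<Rightarrow> real) \<Rightarrow> 'a set \<Rightarrow> 'a \<Rightarrow> (nat \<Rightarrow> 'a) \<Rightarrow> ('a \<Rightarrow> real) \<Rightarrow> bool" where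
  "d_converges d C b xs g \<longleftrightarrow> (\<forall>y\<in>C. ((\<lambda>n. d y (xs n) - d b (xs n)) \<longlonglongrightarrow> g y))"

text \<open>Horofunctions of d on C with basepoint b. Functions on C are represented
  canonically as functions 'a => real vanishing outside C.\<close>
definition horofunctions ::
  "('a \<Rightarrow> 'a \<Rightarrow> real) \<Rightarrow> 'a set \<Rightarrow> 'a \<Rightarrow> ('a \<Rightarrow> real) set" where
  "horofunctions d C b = {g. (\<forall>y. y \<notin> C \<longrightarrow> g y = 0) \<and>
      (\<exists>xs. (\<forall>n. xs n \<in> C) \<and> d_converges d C b xs g) \<and>
      \<not> (\<exists>p\<in>C. \<forall>y\<in>C. g y = d y p - d b p)}"

definition A_set :: "'a::euclidean_space set \<Rightarrow> 'a \<Rightarrow> 'a \<Rightarrow> ('a \<Rightarrow> real) set" where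
  "A_set C b x = {g. g \<in> horofunctions (funk C) C b \<and>
      (\<exists>xs. (\<forall>n. xs n \<in> C) \<and> xs \<longlonglongrightarrow> x \<and> d_converges (funk C) C b xs g)}"

end

theory Submission imports Defs begin

lemma h1: "((c::real) *\<^sub>R x - y) + x = (c + 1) *\<^sub>R x - y" for x y :: "'a::real_vector"
  by (simp add: algebra_simps)
lemma h2: "((l'::real) *\<^sub>R x - y) + (l - l') *\<^sub>R x = l *\<^sub>R x - y" for x y :: "'a::real_vector"
  by (simp add: algebra_simps)

locale hcone =
  fixes C :: "'a::euclidean_space set"
  assumes oc: "open_cone C" and nl: "contains_no_lines C"
begin

lemma C_open: "open C" using oc by (simp add: open_cone_def)
lemma C_convex: "convex C" using oc by (simp add: open_cone_def)
lemma C_scale: "l > 0 \<Longrightarrow> x \<in> C \<Longrightarrow> l *\<^sub>R x \<in> C" using oc by (simp add: open_cone_def)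
lemma C_zero: "0 \<notin> C" using oc by (simp add: open_cone_def)
lemma C_ne: "C \<noteq> {}" using oc by (simp add: open_cone_def)
lemma C_nz: "x \<in> C \<Longrightarrow> x \<noteq> 0" using C_zero by auto
lemma C_K: "x \<in> C \<Longrightarrow> x \<in> closure C" using closure_subset by auto

lemma C_add: assumes "x \<in> C" "y \<in> C" shows "x + y \<in> C"
proof -
  have "(1/2) *\<^sub>R x + (1/2) *\<^sub>R y \<in> C"
    using C_convex assms by (intro convexD) auto
  from C_scale[OF _ this, of 2] show ?thesis by (simp add: algebra_simps)
qed

lemma K_zero: "0 \<in> closure C"
proof -
  obtain x where x: "x \<in> C" using C_ne by auto
  have "(\<lambda>n. inverse (real (Suc n)) *\<^sub>R x) \<longlonglongrightarrow> 0 *\<^sub>R x"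
    by (intro tendsto_intros LIMSEQ_inverse_real_of_nat)
  moreover have "\<forall>n. inverse (real (Suc n)) *\<^sub>R x \<in> C" using x C_scale by auto
  ultimately show ?thesis unfolding closure_sequential by auto
qed

lemma K_scale: assumes "c \<ge> 0" "k \<in> closure C" shows "c *\<^sub>R k \<in> closure C"
proof (cases "c = 0")
  case True then show ?thesis using K_zero by simp
next
  case False
  then have "c > 0" using assms by simp
  have "c *\<^sub>R k \<in> (*\<^sub>R) c ` closure C" using assms by auto
  also have "\<dots> = closure ((*\<^sub>R) c ` C)" by (simp add: closure_scaleR)
  also have "\<dots> \<subseteq> closure C" using C_scale \<open>c > 0\<close> by (intro closure_mono) auto
  finally show ?thesis .
qed

lemma C_add_K: assumes "x \<in> C" "k \<in> closure C" shows "x + k \<in> C"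
proof -
  obtain e where e: "e > 0" "ball x e \<subseteq> C" using C_open assms(1) open_contains_ball by blast
  obtain c where c: "c \<in> C" "dist c k < e" using assms(2) e(1) closure_approachable by blast
  have "x + (k - c) \<in> ball x e" using c(2) by (simp add: dist_norm norm_minus_commute)
  then have "x + (k - c) \<in> C" using e by auto
  from C_add[OF this c(1)] show ?thesis by simp
qed

lemma K_add: assumes "a \<in> closure C" "k \<in> closure C" shows "a + k \<in> closure C"
proof -
  obtain f where f: "\<forall>n. f n \<in> C" "f \<longlonglongrightarrow> a" using assms(1) unfolding closure_sequential by auto
  have "\<forall>n. f n + k \<in> C" using f(1) C_add_K assms(2) by auto
  moreover have "(\<lambda>n. f n + k) \<longlonglongrightarrow> a + k" using f(2) by (intro tendsto_intros)
  ultimately show ?thesis unfolding closure_sequential by auto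
qed

lemma pointed: assumes "k \<in> closure C" "- k \<in> closure C" shows "k = 0"
proof (rule ccontr)
  assume "k \<noteq> 0"
  obtain x where x: "x \<in> C" using C_ne by auto
  have "\<forall>t::real. x + t *\<^sub>R k \<in> C"
  proof
    fix t :: real
    show "x + t *\<^sub>R k \<in> C"
    proof (cases "t \<ge> 0")
      case True then show ?thesis using C_add_K[OF x K_scale[OF True assms(1)]] by simp
    next
      case False
      then have "-t \<ge> 0" by simp
      from C_add_K[OF x K_scale[OF this assms(2)]] show ?thesis by simp
    qed
  qed
  then show False using nl \<open>k \<noteq> 0\<close> unfolding contains_no_lines_def by blast
qed

lemma cball_le: assumes "x \<in> C" shows "\<exists>e>0. \<forall>w. (norm w / e) *\<^sub>R x - w \<in> closure C"
proof -
  obtain e where e: "e > 0" "ball x e \<subseteq> C" using C_open assms open_contains_ball by blast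
  have "cball x e \<subseteq> closure C"
    using closure_mono[OF e(2)] closure_ball[OF e(1), of x] by simp
  have "(norm w / e) *\<^sub>R x - w \<in> closure C" for w
  proof (cases "w = 0")
    case True then show ?thesis using K_zero by simp
  next
    case False
    define v where "v = x - (e / norm w) *\<^sub>R w"
    have "dist x v = e" using False e(1) by (simp add: v_def dist_norm)
    then have "v \<in> closure C" using \<open>cball x e \<subseteq> closure C\<close> by auto
    from K_scale[OF _ this, of "norm w / e"] e(1) False
    show ?thesis by (simp add: v_def algebra_simps)
  qed
  with e show ?thesis by blast
qed


abbreviation M where "M \<equiv> cone_M C"

lemma M_unfold: "M y x = Inf {l. l > 0 \<and> l *\<^sub>R x - y \<in> closure C}"
  by (simp add: cone_M_def cone_le_def)

lemma S_ne: assumes "x \<in> C" shows "\<exists>l>0. l *\<^sub>R x - y \<in> closure C"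
proof -
  obtain e where e: "e > 0" "\<forall>w. (norm w / e) *\<^sub>R x - w \<in> closure C" using cball_le[OF assms] by blast
  have "((norm y / e) *\<^sub>R x - y) + x \<in> closure C" using K_add[OF e(2)[rule_format] C_K[OF assms]] .
  moreover have "norm y / e + 1 > 0" using e(1) by (simp add: add_nonneg_pos)
  moreover have "((norm y / e) *\<^sub>R x - y) + x = (norm y / e + 1) *\<^sub>R x - y" by (rule h1)
  ultimately show ?thesis by metis
qed

lemma M_le: "l > 0 \<Longrightarrow> l *\<^sub>R x - y \<in> closure C \<Longrightarrow> M y x \<le> l"
  unfolding M_unfold by (rule cInf_lower) (auto intro: bdd_belowI[of _ 0])

lemma M_ge0: assumes "x \<in> C" shows "0 \<le> M y x"
  unfolding M_unfold using S_ne[OF assms, of y] by (intro cInf_greatest) auto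

lemma M_lt: assumes "x \<in> C" "M y x < l" shows "l *\<^sub>R x - y \<in> closure C"
proof -
  have ne: "{l. l > 0 \<and> l *\<^sub>R x - y \<in> closure C} \<noteq> {}" using S_ne[OF assms(1), of y] by auto
  have "Inf {l. l > 0 \<and> l *\<^sub>R x - y \<in> closure C} < l" using assms(2) M_unfold by simp
  moreover have bdd: "bdd_below {l. l > 0 \<and> l *\<^sub>R x - y \<in> closure C}" by (rule bdd_belowI[of _ 0]) auto
  ultimately have "\<exists>l'\<in>{l. l > 0 \<and> l *\<^sub>R x - y \<in> closure C}. l' < l"
    using cInf_less_iff[OF ne bdd, of l] by blast
  then obtain l' where l': "l' > 0" "l' *\<^sub>R x - y \<in> closure C" "l' < l" by auto
  have "(l' *\<^sub>R x - y) + (l - l') *\<^sub>R x \<in> closure C"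
    using K_add[OF l'(2) K_scale[OF _ C_K[OF assms(1)]]] l'(3) by simp
  then show ?thesis by (simp only: h2)
qed

lemma M_le_from: assumes "c \<ge> 0" "\<And>l. l > c \<Longrightarrow> l *\<^sub>R x - y \<in> closure C" shows "M y x \<le> c"
proof (rule ccontr)
  assume "\<not> M y x \<le> c"
  define l where "l = (M y x + c) / 2"
  have "l > c" "l > 0" "l < M y x" using \<open>\<not> M y x \<le> c\<close> assms(1) by (auto simp: l_def)
  with M_le[OF \<open>l > 0\<close> assms(2)] show False by auto
qed

lemma M_closed: assumes "x \<in> C" "c > 0" "M y x \<le> c" shows "c *\<^sub>R x - y \<in> closure C"
proof -
  have "\<forall>n. (c + inverse (real (Suc n))) *\<^sub>R x - y \<in> closure C"
    using assms by (intro allI M_lt) (auto intro: add_le_less_mono order_le_less_trans)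
  moreover have "(\<lambda>n. (c + inverse (real (Suc n))) *\<^sub>R x - y) \<longlonglongrightarrow> (c + 0) *\<^sub>R x - y"
    by (intro tendsto_intros LIMSEQ_inverse_real_of_nat)
  ultimately show ?thesis using closed_sequentially[OF closed_closure] by fastforce
qed

lemma M_self: "x \<in> C \<Longrightarrow> M x x \<le> 1"
  using M_le[of 1 x x] K_zero by simp

lemma M_pos: assumes "x \<in> C" "y \<in> closure C" "y \<noteq> 0" shows "0 < M y x"
proof (rule ccontr)
  assume "\<not> 0 < M y x"
  then have "M y x < l" if "l > 0" for l using that by simp
  then have "\<forall>n. inverse (real (Suc n)) *\<^sub>R x - y \<in> closure C" using M_lt[OF assms(1)] by simp
  moreover have "(\<lambda>n. inverse (real (Suc n)) *\<^sub>R x - y) \<longlonglongrightarrow> 0 *\<^sub>R x - y"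
    by (intro tendsto_intros LIMSEQ_inverse_real_of_nat)
  ultimately have "- y \<in> closure C" using closed_sequentially[OF closed_closure] by fastforce
  with pointed[OF assms(2)] assms(3) show False by simp
qed

lemma M_first: assumes "x \<in> C" "A \<ge> 0" "A *\<^sub>R y - y' \<in> closure C" shows "M y' x \<le> A * M y x"
proof (rule M_le_from)
  show "0 \<le> A * M y x" using assms M_ge0 by simp
  fix l assume l: "l > A * M y x"
  show "l *\<^sub>R x - y' \<in> closure C"
  proof (cases "A = 0")
    case True
    then have "l > 0" using l by simp
    have "l *\<^sub>R x + (A *\<^sub>R y - y') \<in> closure C"
      using K_add[OF K_scale[OF _ C_K[OF assms(1)]] assms(3)] \<open>l > 0\<close> by simp
    then show ?thesis using True by simp
  next
    case False
    then have "A > 0" using assms(2) by simp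
    then have "M y x < l / A" using l by (simp add: field_simps mult.commute)
    from K_scale[OF _ M_lt[OF assms(1) this], of A] \<open>A > 0\<close>
    have "l *\<^sub>R x - A *\<^sub>R y \<in> closure C" by (simp add: algebra_simps)
    from K_add[OF this assms(3)] show ?thesis by simp
  qed
qed

lemma sec_helper: "l *\<^sub>R (x' - a *\<^sub>R x) + ((a * l) *\<^sub>R x - y) = l *\<^sub>R x' - y"
  for x x' y :: 'a by (simp add: algebra_simps)

lemma M_second: assumes "x \<in> C" "a > 0" "x' - a *\<^sub>R x \<in> closure C" shows "M y x' \<le> M y x / a"
proof (rule M_le_from)
  show "0 \<le> M y x / a" using assms M_ge0 by simp
  fix l assume l: "l > M y x / a"
  then have "M y x < a * l" using assms(2) by (simp add: field_simps mult.commute)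
  have "0 \<le> M y x / a" using M_ge0[OF assms(1), of y] assms(2) by simp
  then have "l \<ge> 0" using l by linarith
  from K_add[OF K_scale[OF \<open>l \<ge> 0\<close> assms(3)] M_lt[OF assms(1) \<open>M y x < a * l\<close>]]
  show "l *\<^sub>R x' - y \<in> closure C"
    by (simp only: sec_helper)
qed

lemma sum_helper: "l = a1 + a2 \<Longrightarrow> l *\<^sub>R x - (u + w) = (a1 *\<^sub>R x - u) + (a2 *\<^sub>R x - w)"
  for x u w :: 'a by (simp add: scaleR_add_left)

lemma M_subadd: assumes "x \<in> C" shows "M (u + w) x \<le> M u x + M w x"
proof (rule M_le_from)
  show "0 \<le> M u x + M w x" using M_ge0[OF assms] by (simp add: add_nonneg_nonneg)
  fix l assume l: "l > M u x + M w x"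
  define d where "d = (l - M u x - M w x) / 2"
  have "M u x < M u x + d" "M w x < M w x + d" using l by (auto simp: d_def)
  from K_add[OF M_lt[OF assms this(1)] M_lt[OF assms this(2)]]
  have "((M u x + d) *\<^sub>R x - u) + ((M w x + d) *\<^sub>R x - w) \<in> closure C" .
  moreover have "l = (M u x + d) + (M w x + d)" unfolding d_def by (simp add: field_simps)
  ultimately show "l *\<^sub>R x - (u + w) \<in> closure C" using sum_helper by metis
qed

lemma M_lip: assumes "y \<in> C" shows "\<exists>e>0. \<forall>u v. \<bar>M u y - M v y\<bar> \<le> norm (u - v) / e"
proof -
  obtain e where e: "e > 0" "\<forall>w. (norm w / e) *\<^sub>R y - w \<in> closure C" using cball_le[OF assms] by blast
  have bd: "M w y \<le> norm w / e" for w
  proof -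
    have "M w y \<le> (norm w / e) * M y y" using M_first[OF assms _ e(2)[rule_format]] e(1) by simp
    also have "\<dots> \<le> norm w / e"
    proof -
      have "norm w * M y y \<le> norm w" using M_self[OF assms] by (simp add: mult_left_le)
      then show ?thesis using e(1) by (simp add: divide_right_mono)
    qed
    finally show ?thesis .
  qed
  have one: "M u y - M v y \<le> norm (u - v) / e" for u v
    using M_subadd[OF assms, of v "u - v"] bd[of "u - v"] by simp
  have "\<bar>M u y - M v y\<bar> \<le> norm (u - v) / e" for u v
    using one[of u v] one[of v u] by (simp add: abs_le_iff norm_minus_commute)
  with e show ?thesis by blast
qed

lemma M_cont1: assumes "y \<in> C" "us \<longlonglongrightarrow> u" shows "(\<lambda>n. M (us n) y) \<longlonglongrightarrow> M u y"
proof -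
  obtain e where e: "e > 0" "\<forall>u v. \<bar>M u y - M v y\<bar> \<le> norm (u - v) / e" using M_lip[OF assms(1)] by blast
  have "(\<lambda>n. us n - u) \<longlonglongrightarrow> 0" using assms(2) by (rule LIM_zero)
  then have "(\<lambda>n. norm (us n - u)) \<longlonglongrightarrow> 0" by (rule tendsto_norm_zero)
  then have "(\<lambda>n. norm (us n - u) / e) \<longlonglongrightarrow> 0 / e" using e(1) by (intro tendsto_intros) auto
  then have t: "(\<lambda>n. norm (us n - u) / e) \<longlonglongrightarrow> 0" by simp
  have "\<forall>\<^sub>F n in sequentially. norm (M (us n) y - M u y) \<le> norm (us n - u) / e"
    using e(2) by simp
  from Lim_null_comparison[OF this t] have "(\<lambda>n. M (us n) y - M u y) \<longlonglongrightarrow> 0" .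
  then show ?thesis by (rule LIM_zero_cancel)
qed


lemma h3: "xs - (1 - d) *\<^sub>R x = (norm (x - xs) / e) *\<^sub>R x - (x - xs)" if "d = norm (x - xs) / e"
  for x xs :: 'a using that by (simp add: algebra_simps)

lemma h4: "(1 / (1 + d)) *\<^sub>R ((norm (xs - x) / e) *\<^sub>R x - (xs - x)) = x - (1 / (1 + d)) *\<^sub>R xs"
  if "d = norm (xs - x) / e" "d > -1" for x xs :: 'a
proof -
  have e1: "(norm (xs - x) / e) *\<^sub>R x - (xs - x) = (1 + d) *\<^sub>R x - xs" using that(1) by (simp add: algebra_simps)
  have e2: "(1/(1+d)) *\<^sub>R ((1+d) *\<^sub>R x - xs) = ((1/(1+d))*(1+d)) *\<^sub>R x - (1/(1+d)) *\<^sub>R xs"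
    by (simp only: scaleR_right_diff_distrib scaleR_scaleR)
  have e3: "(1/(1+d))*(1+d) = 1" using that(2) by simp
  show ?thesis by (simp only: e1 e2 e3 scaleR_one)
qed

lemma M_cont2: assumes "x \<in> C" "\<And>n. xs n \<in> C" "xs \<longlonglongrightarrow> x" shows "(\<lambda>n. M y (xs n)) \<longlonglongrightarrow> M y x"
proof -
  obtain e where e: "e > 0" "\<forall>w. (norm w / e) *\<^sub>R x - w \<in> closure C" using cball_le[OF assms(1)] by blast
  define d where "d n = norm (xs n - x) / e" for n
  have "(\<lambda>n. xs n - x) \<longlonglongrightarrow> 0" using assms(3) by (rule LIM_zero)
  then have "(\<lambda>n. norm (xs n - x)) \<longlonglongrightarrow> 0" by (rule tendsto_norm_zero)
  then have "(\<lambda>n. norm (xs n - x) / e) \<longlonglongrightarrow> 0 / e" using e(1) by (intro tendsto_intros) auto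
  then have d0: "d \<longlonglongrightarrow> 0" by (simp add: d_def[abs_def])
  have d_nn: "d n \<ge> 0" for n using e(1) by (simp add: d_def)
  have ev: "\<forall>\<^sub>F n in sequentially. d n < 1/2" using d0 by (rule order_tendstoD) simp
  have up: "M y (xs n) \<le> M y x / (1 - d n)" if "d n < 1/2" for n
  proof (rule M_second[OF assms(1)])
    show "0 < 1 - d n" using that by simp
    have "d n = norm (x - xs n) / e" by (simp add: d_def norm_minus_commute)
    from h3[OF this] e(2)[rule_format, of "x - xs n"] show "xs n - (1 - d n) *\<^sub>R x \<in> closure C" by metis
  qed
  have lo: "M y x / (1 + d n) \<le> M y (xs n)" for n
  proof -
    have "x - (1 / (1 + d n)) *\<^sub>R xs n \<in> closure C"
      using K_scale[OF _ e(2)[rule_format, of "xs n - x"], of "1 / (1 + d n)"] h4[where d="d n" and xs="xs n" and x=x and e=e] d_nn[of n]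
      by (simp add: d_def)
    from M_second[OF assms(2) _ this, of y] d_nn[of n]
    have "M y x \<le> M y (xs n) * (1 + d n)" by (simp add: add_pos_nonneg)
    then show ?thesis using d_nn[of n] by (simp add: divide_le_eq add_pos_nonneg)
  qed
  have "(\<lambda>n. M y x / (1 + d n)) \<longlonglongrightarrow> M y x / (1 + 0)" using d0 by (intro tendsto_intros) auto
  then have l1: "(\<lambda>n. M y x / (1 + d n)) \<longlonglongrightarrow> M y x" by simp
  have "(\<lambda>n. M y x / (1 - d n)) \<longlonglongrightarrow> M y x / (1 - 0)" using d0 by (intro tendsto_intros) auto
  then have l2: "(\<lambda>n. M y x / (1 - d n)) \<longlonglongrightarrow> M y x" by simp
  have u: "\<forall>\<^sub>F n in sequentially. M y (xs n) \<le> M y x / (1 - d n)" using ev by eventually_elim (rule up)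
  have w: "\<forall>\<^sub>F n in sequentially. M y x / (1 + d n) \<le> M y (xs n)" using lo by simp
  show ?thesis by (rule tendsto_sandwich[OF w u l1 l2])
qed

lemma M_scale2: assumes "x \<in> C" "c > 0" shows "M y (c *\<^sub>R x) = M y x / c"
proof (rule antisym)
  show "M y (c *\<^sub>R x) \<le> M y x / c" using M_second[OF assms(1) assms(2)] K_zero by simp
  have "M y x \<le> M y (c *\<^sub>R x) / (1 / c)" using M_second[OF C_scale[OF assms(2,1)], of "1/c" x y] K_zero assms(2) by simp
  then show "M y x / c \<le> M y (c *\<^sub>R x)" using assms(2) by (simp add: divide_le_eq mult.commute)
qed

lemma M_scale1: assumes "y \<in> C" "c > 0" shows "M (c *\<^sub>R x) y = c * M x y"
proof (rule antisym)
  show "M (c *\<^sub>R x) y \<le> c * M x y" using M_first[OF assms(1), of c x "c *\<^sub>R x"] K_zero assms(2) by simp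
  have "M x y \<le> (1 / c) * M (c *\<^sub>R x) y" using M_first[OF assms(1), of "1/c" "c *\<^sub>R x" x] K_zero assms(2) by simp
  then show "c * M x y \<le> M (c *\<^sub>R x) y" using assms(2) by (simp add: field_simps)
qed

lemma M_posC: "x \<in> C \<Longrightarrow> y \<in> C \<Longrightarrow> 0 < M y x"
  using M_pos C_K C_nz by blast

lemma hilbert_scale: assumes "x \<in> C" "y \<in> C" "c > 0" shows "hilbert C y (c *\<^sub>R x) = hilbert C y x"
proof -
  have "hilbert C y (c *\<^sub>R x) = ln (M y x / c) + ln (c * M x y)"
    by (simp add: hilbert_def funk_def M_scale2[OF assms(1,3)] M_scale1[OF assms(2,3)])
  also have "\<dots> = ln (M y x) + ln (M x y)" using M_posC[OF assms(1,2)] M_posC[OF assms(2,1)] assms(3)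
    by (simp add: ln_div ln_mult)
  finally show ?thesis by (simp add: hilbert_def funk_def)
qed


lemma h5: "(1 / L) *\<^sub>R (b + (L *\<^sub>R z - b)) = z" if "L > 0" for b z :: 'a
  using that by simp

lemma B_inf: assumes "b \<in> C" "\<And>n. zs n \<in> C" "zs \<longlonglongrightarrow> z" "z \<notin> C"
  shows "filterlim (\<lambda>n. M b (zs n)) at_top sequentially"
  unfolding filterlim_at_top
proof
  fix Z :: real
  define L where "L = max Z 1"
  have L: "L > 0" "Z \<le> L" by (auto simp: L_def)
  have notK: "L *\<^sub>R z - b \<notin> closure C"
  proof
    assume "L *\<^sub>R z - b \<in> closure C"
    from C_scale[OF _ C_add_K[OF assms(1) this], of "1/L"] L(1) h5[OF L(1), of b z] assms(4) show False by simp
  qed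
  have "(\<lambda>n. L *\<^sub>R zs n - b) \<longlonglongrightarrow> L *\<^sub>R z - b" using assms(3) by (intro tendsto_intros)
  moreover have "open (- closure C)" by auto
  ultimately have "\<forall>\<^sub>F n in sequentially. L *\<^sub>R zs n - b \<in> - closure C"
    using notK by (intro topological_tendstoD) auto
  then show "\<forall>\<^sub>F n in sequentially. Z \<le> M b (zs n)"
  proof eventually_elim
    case (elim n)
    have "L \<le> M b (zs n)"
    proof (rule ccontr)
      assume "\<not> L \<le> M b (zs n)"
      then have "M b (zs n) < L" by simp
      from M_lt[OF assms(2) this] elim show False by simp
    qed
    then show ?case using L(2) by simp
  qed
qed

lemma M_gt1: assumes "p \<in> C" "z \<in> closure C" "z \<noteq> 0" shows "1 < M (p + z) p"
proof (rule ccontr)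
  assume "\<not> 1 < M (p + z) p"
  then have "M (p + z) p \<le> 1" by simp
  from M_closed[OF assms(1) _ this] have "- z \<in> closure C" by simp
  with pointed[OF assms(2)] assms(3) show False by simp
qed

lemma h6: "(1 / l) *\<^sub>R (l *\<^sub>R (p + x) - p) = x - ((1 - l) / l) *\<^sub>R p" if "l > 0" for p x :: 'a
proof -
  have "(1 / l) *\<^sub>R (l *\<^sub>R (p + x) - p) = ((1/l) * l) *\<^sub>R (p + x) - (1/l) *\<^sub>R p"
    by (simp only: scaleR_right_diff_distrib scaleR_scaleR)
  also have "\<dots> = p + x - (1/l) *\<^sub>R p" using that by simp
  also have "\<dots> = x - ((1 - l) / l) *\<^sub>R p" using that by (simp add: diff_divide_distrib algebra_simps)
  finally show ?thesis .
qed

lemma M_ge1b: assumes "p \<in> C" "x \<in> closure C" "x \<notin> C" shows "1 \<le> M p (p + x)"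
proof (rule ccontr)
  assume "\<not> 1 \<le> M p (p + x)"
  then have lt: "M p (p + x) < 1" by simp
  have pxC: "p + x \<in> C" using C_add_K[OF assms(1,2)] .
  define l where "l = (M p (p + x) + 1) / 2"
  have l: "0 < l" "l < 1" "M p (p + x) < l" using lt M_ge0[OF pxC, of p] by (auto simp: l_def)
  have "(1 / l) *\<^sub>R (l *\<^sub>R (p + x) - p) \<in> closure C" using K_scale[OF _ M_lt[OF pxC l(3)]] l(1) by simp
  then have "x - ((1 - l) / l) *\<^sub>R p \<in> closure C" using h6[OF l(1), of p x] by simp
  from C_add_K[OF C_scale[OF _ assms(1), of "(1 - l) / l"] this] l have "x \<in> C" by simp
  with assms(3) show False by simp
qed

lemma FI: assumes "b \<in> C" "\<And>n. zs n \<in> C" "zs \<longlonglongrightarrow> z" "z \<in> closure C" "z \<notin> C"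
  and conv: "\<And>y. y \<in> C \<Longrightarrow> (\<lambda>n. funk C y (zs n) - funk C b (zs n)) \<longlonglongrightarrow> f y"
  and y: "y \<in> C"
  shows "f (y + z) = f y"
proof -
  have yz: "y + z \<in> C" using C_add_K[OF y assms(4)] .
  define a where "a n = M y (zs n)" for n
  define c where "c n = M (y + z) (zs n)" for n
  define B where "B n = M b (zs n)" for n
  have apos: "a n > 0" "c n > 0" "B n > 0" for n
    using M_posC[OF assms(2) y] M_posC[OF assms(2) yz] M_posC[OF assms(2) assms(1)] by (auto simp: a_def c_def B_def)
  have ca: "a n \<le> c n" for n
    using M_first[OF assms(2), of 1 "y + z" y] assms(4) by (simp add: a_def c_def)
  have la: "(\<lambda>n. ln (a n) - ln (B n)) \<longlonglongrightarrow> f y" using conv[OF y] by (simp add: a_def B_def funk_def)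
  have lc: "(\<lambda>n. ln (c n) - ln (B n)) \<longlonglongrightarrow> f (y + z)" using conv[OF yz] by (simp add: c_def B_def funk_def)
  have ge: "f y \<le> f (y + z)"
  proof (rule LIMSEQ_le[OF la lc])
    show "\<exists>N. \<forall>n\<ge>N. ln (a n) - ln (B n) \<le> ln (c n) - ln (B n)" using ca apos by auto
  qed
  obtain e where e: "e > 0" "\<forall>w. (norm w / e) *\<^sub>R b - w \<in> closure C" using cball_le[OF assms(1)] by blast
  define en where "en n = norm (z - zs n) / e" for n
  have bound: "c n / B n \<le> a n / B n + 1 / B n + en n" for n
  proof -
    have "c n \<le> a n + M z (zs n)" using M_subadd[OF assms(2), of y z] by (simp add: a_def c_def)
    also have "M z (zs n) \<le> M (zs n) (zs n) + M (z - zs n) (zs n)"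
      using M_subadd[OF assms(2), of "zs n" "z - zs n"] by simp
    also have "M (zs n) (zs n) \<le> 1" using M_self[OF assms(2)] .
    also have "M (z - zs n) (zs n) \<le> en n * B n"
      using M_first[OF assms(2), of "en n" b "z - zs n"] e by (simp add: en_def B_def)
    finally have "c n \<le> a n + 1 + en n * B n" by simp
    then show ?thesis using apos(3)[of n] by (simp add: divide_simps)
  qed
  have "(\<lambda>n. exp (ln (a n) - ln (B n))) \<longlonglongrightarrow> exp (f y)" using la by (intro tendsto_intros)
  then have ra: "(\<lambda>n. a n / B n) \<longlonglongrightarrow> exp (f y)" using apos by (simp add: exp_diff)
  have "(\<lambda>n. exp (ln (c n) - ln (B n))) \<longlonglongrightarrow> exp (f (y + z))" using lc by (intro tendsto_intros)
  then have rc: "(\<lambda>n. c n / B n) \<longlonglongrightarrow> exp (f (y + z))" using apos by (simp add: exp_diff)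
  have "filterlim B at_top sequentially" using B_inf[OF assms(1,2,3,5)] by (simp add: B_def[abs_def])
  then have "(\<lambda>n. inverse (B n)) \<longlonglongrightarrow> 0" by (rule tendsto_inverse_0_at_top)
  then have rB: "(\<lambda>n. 1 / B n) \<longlonglongrightarrow> 0" by (simp add: divide_inverse)
  have "(\<lambda>n. zs n - z) \<longlonglongrightarrow> 0" using assms(3) by (rule LIM_zero)
  then have "(\<lambda>n. norm (zs n - z)) \<longlonglongrightarrow> 0" by (rule tendsto_norm_zero)
  then have "(\<lambda>n. norm (zs n - z) / e) \<longlonglongrightarrow> 0 / e" using e(1) by (intro tendsto_intros) auto
  then have ren: "en \<longlonglongrightarrow> 0" by (simp add: en_def[abs_def] norm_minus_commute)
  have "(\<lambda>n. a n / B n + 1 / B n + en n) \<longlonglongrightarrow> exp (f y) + 0 + 0"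
    using ra rB ren by (intro tendsto_intros)
  then have "exp (f (y + z)) \<le> exp (f y) + 0 + 0"
    using rc bound by (intro LIMSEQ_le[OF rc]) auto
  then have le: "f (y + z) \<le> f y" by simp
  from ge le show ?thesis by simp
qed

lemma NI: assumes "b \<in> C" "\<And>n. zs n \<in> C" "zs \<longlonglongrightarrow> z" "z \<in> closure C" "z \<notin> C" "z \<noteq> 0"
  and conv: "\<And>y. y \<in> C \<Longrightarrow> (\<lambda>n. funk C y (zs n) - funk C b (zs n)) \<longlonglongrightarrow> f y"
  shows "\<not> (\<exists>p\<in>C. \<forall>y\<in>C. f y = funk C y p - funk C b p)"
proof
  assume "\<exists>p\<in>C. \<forall>y\<in>C. f y = funk C y p - funk C b p"
  then obtain p where p: "p \<in> C" "\<forall>y\<in>C. f y = funk C y p - funk C b p" by blast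
  have pz: "p + z \<in> C" using C_add_K[OF p(1) assms(4)] .
  have "f (p + z) = f p" using FI[OF assms(1-5) conv p(1)] .
  then have "ln (M (p + z) p) = ln (M p p)" using p(2)[rule_format, OF pz] p(2)[rule_format, OF p(1)] by (simp add: funk_def)
  moreover have "M p p < M (p + z) p" using M_self[OF p(1)] M_gt1[OF p(1) assms(4,6)] by simp
  moreover have "0 < M p p" using M_posC[OF p(1) p(1)] .
  ultimately show False by simp
qed


lemma interior_C: "interior C = C" using C_open by (simp add: interior_open)

lemma main:
  assumes b: "b \<in> C"
  shows "horofunctions (hilbert C) C b =
    {g. \<exists>x\<in>frontier C - {0}. \<exists>f\<in>A_set C b x.
          g = (\<lambda>y. if y \<in> C then r_fun C b x y + f y else 0)}"
proof (intro equalityI subsetI)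
  fix g assume "g \<in> horofunctions (hilbert C) C b"
  then obtain xs where g0: "\<forall>y. y \<notin> C \<longrightarrow> g y = 0" and xs: "\<forall>n. xs n \<in> C"
    and conv: "d_converges (hilbert C) C b xs g"
    and notint: "\<not> (\<exists>p\<in>C. \<forall>y\<in>C. g y = hilbert C y p - hilbert C b p)"
    unfolding horofunctions_def by blast
  define zs where "zs n = (1 / norm (xs n)) *\<^sub>R xs n" for n
  have nz: "norm (xs n) > 0" for n using C_nz xs by auto
  have zsC: "zs n \<in> C" for n using C_scale[OF _ xs[rule_format, of n], of "1 / norm (xs n)"] nz[of n]
    by (simp add: zs_def)
  have zsS: "zs n \<in> sphere 0 1" for n using nz[of n] by (simp add: zs_def)
  have hz: "hilbert C y (zs n) = hilbert C y (xs n)" if "y \<in> C" for y n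
    unfolding zs_def using hilbert_scale[OF xs[rule_format, of n] that, of "1 / norm (xs n)"] nz[of n] by simp
  obtain z r where z: "z \<in> sphere 0 1" and r: "strict_mono r" and zr: "(zs \<circ> r) \<longlonglongrightarrow> z"
    using compact_imp_seq_compact[OF compact_sphere, of 0 1] zsS unfolding seq_compact_def by meson
  define w where "w = zs \<circ> r"
  have wC: "w n \<in> C" for n using zsC by (simp add: w_def)
  have wz: "w \<longlonglongrightarrow> z" using zr by (simp add: w_def)
  have convw: "(\<lambda>n. hilbert C y (w n) - hilbert C b (w n)) \<longlonglongrightarrow> g y" if "y \<in> C" for y
  proof -
    have "(\<lambda>n. hilbert C y (xs n) - hilbert C b (xs n)) \<longlonglongrightarrow> g y" using conv that by (simp add: d_converges_def)
    from LIMSEQ_subseq_LIMSEQ[OF this r] show ?thesis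
      using hz[OF that] hz[OF b] by (simp add: w_def o_def)
  qed
  have zK: "z \<in> closure C" using wC wz unfolding closure_sequential by blast
  have z0: "z \<noteq> 0" using z by auto
  have lnM1: "(\<lambda>n. ln (M (w n) y)) \<longlonglongrightarrow> ln (M z y)" if "y \<in> C" for y
    using M_cont1[OF that wz] M_pos[OF that zK z0] by (intro tendsto_intros) auto
  show "g \<in> {g. \<exists>x\<in>frontier C - {0}. \<exists>f\<in>A_set C b x. g = (\<lambda>y. if y \<in> C then r_fun C b x y + f y else 0)}"
  proof (cases "z \<in> C")
    case True
    have "g y = hilbert C y z - hilbert C b z" if y: "y \<in> C" for y
    proof -
      have l2: "(\<lambda>n. ln (M y (w n))) \<longlonglongrightarrow> ln (M y z)" if "y \<in> C" for y
        using M_cont2[OF True wC wz] M_posC[OF True that] by (intro tendsto_intros) auto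
      have "(\<lambda>n. hilbert C y (w n) - hilbert C b (w n)) \<longlonglongrightarrow> hilbert C y z - hilbert C b z"
        unfolding hilbert_def funk_def by (intro tendsto_diff tendsto_add l2 lnM1 y b)
      from LIMSEQ_unique[OF convw[OF y] this] show ?thesis .
    qed
    with notint True show ?thesis by blast
  next
    case False
    have zF: "z \<in> frontier C - {0}" using zK False z0 by (simp add: frontier_def interior_C)
    define f where "f y = (if y \<in> C then g y - r_fun C b z y else 0)" for y
    have fconv: "(\<lambda>n. funk C y (w n) - funk C b (w n)) \<longlonglongrightarrow> f y" if y: "y \<in> C" for y
    proof -
      have "(\<lambda>n. (hilbert C y (w n) - hilbert C b (w n)) - (ln (M (w n) y) - ln (M (w n) b)))
          \<longlonglongrightarrow> g y - (ln (M z y) - ln (M z b))"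
        using convw[OF y] lnM1[OF y] lnM1[OF b] by (intro tendsto_diff)
      then show ?thesis using y by (simp add: f_def r_fun_def rev_funk_def funk_def hilbert_def)
    qed
    have fni: "\<not> (\<exists>p\<in>C. \<forall>y\<in>C. f y = funk C y p - funk C b p)"
      by (rule NI[OF b wC wz zK False z0 fconv])
    have "f \<in> A_set C b z"
      unfolding A_set_def horofunctions_def d_converges_def
      using fconv fni wC wz by (auto simp: f_def)
    moreover have "g = (\<lambda>y. if y \<in> C then r_fun C b z y + f y else 0)"
      using g0 by (auto simp: f_def)
    ultimately show ?thesis using zF by blast
  qed
next
  fix g assume "g \<in> {g. \<exists>x\<in>frontier C - {0}. \<exists>f\<in>A_set C b x. g = (\<lambda>y. if y \<in> C then r_fun C b x y + f y else 0)}"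
  then obtain x f where x: "x \<in> frontier C - {0}" and f: "f \<in> A_set C b x"
    and g: "g = (\<lambda>y. if y \<in> C then r_fun C b x y + f y else 0)" by blast
  have xK: "x \<in> closure C" and xC: "x \<notin> C" and x0: "x \<noteq> 0" using x by (auto simp: frontier_def interior_C)
  obtain xs where xs: "\<forall>n. xs n \<in> C" "xs \<longlonglongrightarrow> x" and fc: "d_converges (funk C) C b xs f"
    using f unfolding A_set_def by blast
  have fconv: "(\<lambda>n. funk C y (xs n) - funk C b (xs n)) \<longlonglongrightarrow> f y" if "y \<in> C" for y
    using fc that by (simp add: d_converges_def)
  have lnM1: "(\<lambda>n. ln (M (xs n) y)) \<longlonglongrightarrow> ln (M x y)" if "y \<in> C" for y
    using M_cont1[OF that xs(2)] M_pos[OF that xK x0] by (intro tendsto_intros) auto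
  have gconv: "(\<lambda>n. hilbert C y (xs n) - hilbert C b (xs n)) \<longlonglongrightarrow> g y" if y: "y \<in> C" for y
  proof -
    have "(\<lambda>n. (funk C y (xs n) - funk C b (xs n)) + (ln (M (xs n) y) - ln (M (xs n) b)))
          \<longlonglongrightarrow> f y + (ln (M x y) - ln (M x b))"
      using fconv[OF y] lnM1[OF y] lnM1[OF b] by (intro tendsto_add tendsto_diff)
    then show ?thesis using y by (simp add: g r_fun_def rev_funk_def funk_def hilbert_def algebra_simps)
  qed
  have notint: "\<not> (\<exists>p\<in>C. \<forall>y\<in>C. g y = hilbert C y p - hilbert C b p)"
  proof
    assume "\<exists>p\<in>C. \<forall>y\<in>C. g y = hilbert C y p - hilbert C b p"
    then obtain p where p: "p \<in> C" "\<forall>y\<in>C. g y = hilbert C y p - hilbert C b p" by blast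
    have px: "p + x \<in> C" using C_add_K[OF p(1) xK] .
    have ff: "f (p + x) = f p" using FI[OF b _ xs(2) xK xC fconv p(1)] xs(1) by blast
    have g1: "g (p + x) - g p = ln (M x (p + x)) - ln (M x p)"
      using ff px p(1) by (simp add: g r_fun_def rev_funk_def funk_def)
    have m1: "M x (p + x) \<le> M x p" using M_second[OF p(1), of 1 "p + x" x] xK by simp
    have "ln (M x (p + x)) \<le> ln (M x p)" using m1 M_pos[OF px xK x0] by simp
    then have gle: "g (p + x) - g p \<le> 0" using g1 by simp
    have "g (p + x) - g p = ln (M (p + x) p) + ln (M p (p + x)) - (ln (M p p) + ln (M p p))"
      using p(2) px p(1) by (simp add: hilbert_def funk_def)
    moreover have "ln (M (p + x) p) > 0" using M_gt1[OF p(1) xK x0] by simp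
    moreover have "ln (M p (p + x)) \<ge> 0" using M_ge1b[OF p(1) xK xC] by simp
    moreover have "ln (M p p) \<le> 0" using M_self[OF p(1)] M_posC[OF p(1) p(1)] by simp
    ultimately have "g (p + x) - g p > 0" by linarith
    with gle show False by simp
  qed
  show "g \<in> horofunctions (hilbert C) C b"
    unfolding horofunctions_def d_converges_def using xs(1) gconv notint
    by (auto simp: g)
qed

end

theorem mainTheorem7:
  fixes C :: "'a::euclidean_space set" and b :: 'a
  assumes "open_cone C" and "contains_no_lines C" and "b \<in> C"
  shows "horofunctions (hilbert C) C b =
    {g. \<exists>x\<in>frontier C - {0}. \<exists>f\<in>A_set C b x.
          g = (\<lambda>y. if y \<in> C then r_fun C b x y + f y else 0)}"
proof -
  interpret hcone C using assms(1,2) by unfold_locales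
  show ?thesis by (rule main[OF assms(3)])
qed

end
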